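(* Let $G$ be a canonically prime bichain graph, and let $\phi$ be an embedding of $G$ as an induced subgraph into a $Z$-grid $Z$ with vertex set $\{z_{i,j}:1\le i\le a,\ 1\le j\le b\}$ (for some $a,b\ge1$), where for $i<i'$, $z_{i,j}z_{i',j'}$ is an edge iff (1) $i$ odd, $i'=i+1$, $j>j'$; or (2) $i$ even, $i'=i+1$, $j\le j'$; or (3) $i$ even, $i'$ odd, $i'\ge i+3$. Then the set of columns $\{i : z_{i,j}\in\phi(V(G))\text{ for some }j\}$ is a set of consecutive integers.
   Context: A bichain graph is a bipartite graph admitting a bipartition in which each of the two parts can be divided into at most two chains, a chain being a set of vertices whose neighbourhoods are linearly ordered by inclusion. For bipartite graphs $G_1=(X_1,Y_1,E_1)$, $G_2=(X_2,Y_2,E_2)$ on disjoint vertex sets (given with bipartitions) define the disjoint union $G_1\oplus G_2=(X_1\cup X_2,Y_1\cup Y_2,E_1\cup E_2)$, the join $G_1\otimes G_2=(X_1\cup X_2,Y_1\cup Y_2,E_1\cup E_2\cup(X_1\times Y_2)\cup(X_2\times Y_1))$, and the skew join $G_1\oslash G_2=(X_1\cup X_2,Y_1\cup Y_2,E_1\cup E_2\cup(X_1\times Y_2))$. A bipartite graph is canonically prime if it cannot be written in the form $G_1\oplus G_2$, $G_1\otimes G_2$ or $G_1\oslash G_2$ with $G_1,G_2$ nonempty. In the grid, $i$ is the column index. *)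

theory Defs
  imports Main
begin

definition bipartite_graph :: "'v set \<Rightarrow> 'v set \<Rightarrow> ('v \<times> 'v) set \<Rightarrow> bool" where
  "bipartite_graph X Y E \<longleftrightarrow> finite X \<and> finite Y \<and> X \<inter> Y = {} \<and> E \<subseteq> X \<times> Y"

definition adj :: "('v \<times> 'v) set \<Rightarrow> 'v \<Rightarrow> 'v \<Rightarrow> bool" where
  "adj E u v \<longleftrightarrow> (u, v) \<in> E \<or> (v, u) \<in> E"

definition nbhd :: "('v \<times> 'v) set \<Rightarrow> 'v \<Rightarrow> 'v set" where
  "nbhd E v = {u. adj E u v}"

definition is_chain :: "('v \<times> 'v) set \<Rightarrow> 'v set \<Rightarrow> bool" where
  "is_chain E C \<longleftrightarrow> (\<forall>u\<in>C. \<forall>v\<in>C. nbhd E u \<subseteq> nbhd E v \<or> nbhd E v \<subseteq> nbhd E u)"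

definition bichain_graph :: "'v set \<Rightarrow> 'v set \<Rightarrow> ('v \<times> 'v) set \<Rightarrow> bool" where
  "bichain_graph X Y E \<longleftrightarrow> bipartite_graph X Y E \<and>
     (\<exists>P Q. P \<inter> Q = {} \<and> P \<union> Q = X \<union> Y \<and>
        (\<forall>u v. adj E u v \<longrightarrow> (u \<in> P \<and> v \<in> Q) \<or> (u \<in> Q \<and> v \<in> P)) \<and>
        (\<exists>C1 C2. P = C1 \<union> C2 \<and> is_chain E C1 \<and> is_chain E C2) \<and>
        (\<exists>C3 C4. Q = C3 \<union> C4 \<and> is_chain E C3 \<and> is_chain E C4))"

definition decomposable :: "'v set \<Rightarrow> 'v set \<Rightarrow> ('v \<times> 'v) set \<Rightarrow> bool" where
  "decomposable X Y E \<longleftrightarrow>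
     (\<exists>X1 X2 Y1 Y2. X1 \<inter> X2 = {} \<and> X1 \<union> X2 = X \<and> Y1 \<inter> Y2 = {} \<and> Y1 \<union> Y2 = Y \<and>
        X1 \<union> Y1 \<noteq> {} \<and> X2 \<union> Y2 \<noteq> {} \<and>
        (let E1 = E \<inter> (X1 \<times> Y1); E2 = E \<inter> (X2 \<times> Y2) in
          E = E1 \<union> E2 \<or>
          E = E1 \<union> E2 \<union> (X1 \<times> Y2) \<union> (X2 \<times> Y1) \<or>
          E = E1 \<union> E2 \<union> (X1 \<times> Y2)))"

definition canonically_prime :: "'v set \<Rightarrow> 'v set \<Rightarrow> ('v \<times> 'v) set \<Rightarrow> bool" where
  "canonically_prime X Y E \<longleftrightarrow> bipartite_graph X Y E \<and> \<not> decomposable X Y E"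

text \<open>Z-grid: vertex (i,j) stands for z_{i,j}, i the column index.\<close>
definition zgrid_vertices :: "nat \<Rightarrow> nat \<Rightarrow> (nat \<times> nat) set" where
  "zgrid_vertices a b = {(i, j). 1 \<le> i \<and> i \<le> a \<and> 1 \<le> j \<and> j \<le> b}"

definition zedge_lt :: "nat \<times> nat \<Rightarrow> nat \<times> nat \<Rightarrow> bool" where
  "zedge_lt p q \<longleftrightarrow> (case p of (i, j) \<Rightarrow> case q of (i', j') \<Rightarrow>
      i < i' \<and>
      ((odd i \<and> i' = i + 1 \<and> j > j') \<or>
       (even i \<and> i' = i + 1 \<and> j \<le> j') \<or>
       (even i \<and> odd i' \<and> i' \<ge> i + 3)))"

definition zadj :: "nat \<times> nat \<Rightarrow> nat \<times> nat \<Rightarrow> bool" where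
  "zadj p q \<longleftrightarrow> zedge_lt p q \<or> zedge_lt q p"

definition induced_embedding_zgrid ::
  "'v set \<Rightarrow> ('v \<times> 'v) set \<Rightarrow> nat \<Rightarrow> nat \<Rightarrow> ('v \<Rightarrow> nat \<times> nat) \<Rightarrow> bool" where
  "induced_embedding_zgrid V E a b \<phi> \<longleftrightarrow>
     inj_on \<phi> V \<and> \<phi> ` V \<subseteq> zgrid_vertices a b \<and>
     (\<forall>u\<in>V. \<forall>v\<in>V. adj E u v \<longleftrightarrow> zadj (\<phi> u) (\<phi> v))"

end

theory Submission
  imports Defs
begin

lemma zadj_parity: "zadj p q \<Longrightarrow> (even (fst p) \<longleftrightarrow> odd (fst q))"
  unfolding zadj_def zedge_lt_def by (cases p; cases q; auto)

lemma zadj_cross: "fst p < m \<Longrightarrow> m < fst q \<Longrightarrow> (zadj p q \<longleftrightarrow> even (fst p) \<and> odd (fst q))"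
proof -
  assume a: "fst p < m" "m < fst q"
  obtain i j i' j' where pq: "p = (i,j)" "q = (i',j')" by (cases p, cases q)
  have "i + 2 \<le> i'" using a pq by simp
  moreover have "even i \<Longrightarrow> odd i' \<Longrightarrow> i + 2 \<le> i' \<Longrightarrow> i + 3 \<le> i'"
    by (cases "i' = i + 2") auto
  ultimately show ?thesis using pq unfolding zadj_def zedge_lt_def by auto
qed

theorem lemma17:
  fixes X Y :: "'v set" and E :: "('v \<times> 'v) set" and a b :: nat and \<phi> :: "'v \<Rightarrow> nat \<times> nat"
  assumes "canonically_prime X Y E"
    and "bichain_graph X Y E"
    and "1 \<le> a" and "1 \<le> b"
    and "induced_embedding_zgrid (X \<union> Y) E a b \<phi>"
  shows "\<forall>i\<in>fst ` \<phi> ` (X \<union> Y). \<forall>k\<in>fst ` \<phi> ` (X \<union> Y). \<forall>m. i \<le> m \<and> m \<le> k \<longrightarrow>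
           m \<in> fst ` \<phi> ` (X \<union> Y)"
proof -
  have bip: "finite X" "finite Y" "X \<inter> Y = {}" "E \<subseteq> X \<times> Y"
    using assms(1) unfolding canonically_prime_def bipartite_graph_def by auto
  have nd: "\<not> decomposable X Y E" using assms(1) unfolding canonically_prime_def by auto
  have emb: "\<And>u v. u \<in> X \<union> Y \<Longrightarrow> v \<in> X \<union> Y \<Longrightarrow> adj E u v \<longleftrightarrow> zadj (\<phi> u) (\<phi> v)"
    using assms(5) unfolding induced_embedding_zgrid_def by auto
  have eiff: "\<And>x y. x \<in> X \<Longrightarrow> y \<in> Y \<Longrightarrow> (x, y) \<in> E \<longleftrightarrow> zadj (\<phi> x) (\<phi> y)"
  proof -
    fix x y assume xy: "x \<in> X" "y \<in> Y"
    have "(y, x) \<notin> E" using bip xy by auto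
    then show "(x, y) \<in> E \<longleftrightarrow> zadj (\<phi> x) (\<phi> y)" using emb[of x y] xy unfolding adj_def by auto
  qed
  define col where "col v = fst (\<phi> v)" for v
  have Eel: "\<And>e. e \<in> E \<Longrightarrow> fst e \<in> X \<and> snd e \<in> Y \<and> zadj (\<phi> (fst e)) (\<phi> (snd e))"
    using bip(4) eiff by auto
  have align: "((\<forall>v\<in>X. even (col v)) \<and> (\<forall>v\<in>Y. odd (col v))) \<or>
               ((\<forall>v\<in>X. odd (col v)) \<and> (\<forall>v\<in>Y. even (col v)))"
  proof (rule ccontr)
    assume na: "\<not> ?thesis"
    define X1 where "X1 = {v\<in>X. even (col v)}"
    define X2 where "X2 = {v\<in>X. odd (col v)}"
    define Y1 where "Y1 = {v\<in>Y. odd (col v)}"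
    define Y2 where "Y2 = {v\<in>Y. even (col v)}"
    have "X1 \<union> Y1 \<noteq> {}" "X2 \<union> Y2 \<noteq> {}" using na unfolding X1_def X2_def Y1_def Y2_def by auto
    moreover have "E = E \<inter> (X1 \<times> Y1) \<union> E \<inter> (X2 \<times> Y2)"
    proof
      show "E \<subseteq> E \<inter> (X1 \<times> Y1) \<union> E \<inter> (X2 \<times> Y2)"
      proof
        fix e assume e: "e \<in> E"
        obtain x y where exy: "e = (x, y)" by (cases e)
        from Eel[OF e] exy zadj_parity[of "\<phi> x" "\<phi> y"] show "e \<in> E \<inter> (X1 \<times> Y1) \<union> E \<inter> (X2 \<times> Y2)"
          using e unfolding X1_def X2_def Y1_def Y2_def col_def by auto
      qed
    qed auto
    moreover have "X1 \<inter> X2 = {}" "X1 \<union> X2 = X" "Y1 \<inter> Y2 = {}" "Y1 \<union> Y2 = Y"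
      unfolding X1_def X2_def Y1_def Y2_def by auto
    ultimately have "decomposable X Y E" unfolding decomposable_def Let_def by blast
    with nd show False by simp
  qed
  show ?thesis
  proof (intro ballI allI impI, rule ccontr)
    fix i k m
    assume i: "i \<in> fst ` \<phi> ` (X \<union> Y)" and k: "k \<in> fst ` \<phi> ` (X \<union> Y)"
      and ikm: "i \<le> m \<and> m \<le> k" and nm: "m \<notin> fst ` \<phi> ` (X \<union> Y)"
    have ne: "\<And>v. v \<in> X \<union> Y \<Longrightarrow> col v \<noteq> m" using nm unfolding col_def by auto
    obtain vi where vi: "vi \<in> X \<union> Y" "col vi = i" using i unfolding col_def by blast
    obtain vk where vk: "vk \<in> X \<union> Y" "col vk = k" using k unfolding col_def by blast
    have "i < m" "m < k" using ne vi vk ikm by (metis le_neq_implies_less)+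
    define XL where "XL = {v\<in>X. col v < m}"
    define XR where "XR = {v\<in>X. col v > m}"
    define YL where "YL = {v\<in>Y. col v < m}"
    define YR where "YR = {v\<in>Y. col v > m}"
    have parts: "XL \<inter> XR = {}" "XL \<union> XR = X" "YL \<inter> YR = {}" "YL \<union> YR = Y"
      unfolding XL_def XR_def YL_def YR_def using ne by (auto, meson linorder_neqE_nat)+
    have neL: "XL \<union> YL \<noteq> {}" using vi \<open>i < m\<close> unfolding XL_def YL_def by auto
    have neR: "XR \<union> YR \<noteq> {}" using vk \<open>m < k\<close> unfolding XR_def YR_def by auto
    have cross: "\<And>u v. col u < m \<Longrightarrow> m < col v \<Longrightarrow> zadj (\<phi> u) (\<phi> v) \<longleftrightarrow> even (col u) \<and> odd (col v)"
      unfolding col_def by (rule zadj_cross)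
    have zsym: "\<And>p q. zadj p q \<longleftrightarrow> zadj q p" unfolding zadj_def by auto
    from align show False
    proof
      assume al: "(\<forall>v\<in>X. even (col v)) \<and> (\<forall>v\<in>Y. odd (col v))"
      have "E = E \<inter> (XL \<times> YL) \<union> E \<inter> (XR \<times> YR) \<union> (XL \<times> YR)"
      proof (rule set_eqI, rule iffI)
        fix e assume e: "e \<in> E"
        obtain x y where exy: "e = (x, y)" by (cases e)
        have x: "x \<in> X" and y: "y \<in> Y" and z: "zadj (\<phi> x) (\<phi> y)" using Eel[OF e] exy by auto
        have "\<not> (x \<in> XR \<and> y \<in> YL)"
          using cross[of y x] z zsym al x y unfolding XR_def YL_def by auto
        then show "e \<in> E \<inter> (XL \<times> YL) \<union> E \<inter> (XR \<times> YR) \<union> (XL \<times> YR)"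
          using parts x y e exy by blast
      next
        fix e assume e: "e \<in> E \<inter> (XL \<times> YL) \<union> E \<inter> (XR \<times> YR) \<union> (XL \<times> YR)"
        obtain x y where exy: "e = (x, y)" by (cases e)
        show "e \<in> E"
        proof (cases "e \<in> XL \<times> YR")
          case True
          then have "x \<in> X" "y \<in> Y" "col x < m" "m < col y" using exy unfolding XL_def YR_def by auto
          then show ?thesis using eiff cross al exy by auto
        qed (use e in auto)
      qed
      then have "decomposable X Y E" using parts neL neR unfolding decomposable_def Let_def by blast
      with nd show False by simp
    next
      assume al: "(\<forall>v\<in>X. odd (col v)) \<and> (\<forall>v\<in>Y. even (col v))"
      have "E = E \<inter> (XR \<times> YR) \<union> E \<inter> (XL \<times> YL) \<union> (XR \<times> YL)"
      proof (rule set_eqI, rule iffI)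
        fix e assume e: "e \<in> E"
        obtain x y where exy: "e = (x, y)" by (cases e)
        have x: "x \<in> X" and y: "y \<in> Y" and z: "zadj (\<phi> x) (\<phi> y)" using Eel[OF e] exy by auto
        have "\<not> (x \<in> XL \<and> y \<in> YR)"
          using cross[of x y] z al x y unfolding XL_def YR_def by auto
        then show "e \<in> E \<inter> (XR \<times> YR) \<union> E \<inter> (XL \<times> YL) \<union> (XR \<times> YL)"
          using parts x y e exy by blast
      next
        fix e assume e: "e \<in> E \<inter> (XR \<times> YR) \<union> E \<inter> (XL \<times> YL) \<union> (XR \<times> YL)"
        obtain x y where exy: "e = (x, y)" by (cases e)
        show "e \<in> E"
        proof (cases "e \<in> XR \<times> YL")
          case True
          then have "x \<in> X" "y \<in> Y" "col y < m" "m < col x" using exy unfolding XR_def YL_def by auto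
          then show ?thesis using eiff cross[of y x] zsym al exy by auto
        qed (use e in auto)
      qed
      moreover have "XR \<inter> XL = {}" "XR \<union> XL = X" "YR \<inter> YL = {}" "YR \<union> YL = Y" using parts by auto
      ultimately have "decomposable X Y E" using neL neR unfolding decomposable_def Let_def by blast
      with nd show False by simp
    qed
  qed
qed

end
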